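(* Under the derivation $d/dt_1=d/dt_{1,1}+d/dt_{2,1}$ one has $$\frac{du}{dt_1}=\partial_1^3(u)+\partial_2^3(u)+3\partial_1(v_0u)+3\partial_2(w_0u),$$ $$\frac{dv_0}{dt_1}=\partial_1^3(v_0)+\partial_2^3(v_0)+6v_0\partial_1(v_0)+3\partial_1(uw_0)+3\partial_1(v_1),$$ and moreover $\partial_2(v_0)=\partial_1(u)$, $\partial_1(w_0)=\partial_2(u)$, where $w_0=\tau(v_0)$. Consequently, setting $v=3v_0$ (so $\tau(v)=3w_0$), $u$ satisfies the Novikov–Veselov equation $\frac{du}{dt_1}=\partial_1^3u+\partial_2^3u+\partial_1(uv)+\partial_2(u\,\tau(v))$ with $3\partial_1u=\partial_2v$.
   Context: Let $\mathcal{A}$ be the commutative $\mathbb{C}$-algebra of differential polynomials generated by $u$, $(v_i)_{i\ge0}$, $(w_j)_{j\ge0}$ and their jets under two commuting derivations $\partial_1,\partial_2$, subject to $\partial_2(\mathcal{L}_1)=[\mathcal{L}_1,\partial_1^{-1}u]$ and $\partial_1(\mathcal{L}_2)=[\mathcal{L}_2,\partial_2^{-1}u]$, where $\mathcal{L}_1=\partial_1^{-1}(\partial_1^2+v_0+\partial_1^{-1}v_1\partial_1^{-1}+\cdots)$, $\mathcal{L}_2=\partial_2^{-1}(\partial_2^2+w_0+\partial_2^{-1}w_1\partial_2^{-1}+\cdots)$, with $\partial_2(\mathcal{L}_1)$ (resp. $\partial_1(\mathcal{L}_2)$) meaning the derivation applied coefficientwise. Adjoint: anti-automorphism with $\partial_i^*=-\partial_i$,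 $a^*=a$. $\mathcal{H}=\partial_1\partial_2+u$, $A_{i,n}=(\mathcal{L}_i^{2n+1})_+$ (nonnegative-power part). For $\mathcal{P}\in\mathcal{A}[\partial_2]((\partial_1^{-1}))$, "$\mathcal{P}\ \mathrm{mod}\ \mathcal{H}$" is the unique element of $\mathcal{A}((\partial_1^{-1}))$ of the form $\mathcal{P}-\mathcal{Q}\mathcal{H}$, $\mathcal{Q}\in\mathcal{A}[\partial_2]((\partial_1^{-1}))$ (symmetrically with $1,2$ swapped). The $d/dt_{i,n}$ are the evolutionary derivations of $\mathcal{A}$ (commuting with $\partial_1,\partial_2$) defined by $d\mathcal{L}_i/dt_{i,n}=[A_{i,n},\mathcal{L}_i]$, $d\mathcal{L}_1/dt_{2,n}=[A_{2,n},\mathcal{L}_1]\ \mathrm{mod}\ \mathcal{H}$, $d\mathcal{L}_2/dt_{1,n}=[A_{1,n},\mathcal{L}_2]\ \mathrm{mod}\ \mathcal{H}$, $du/dt_{i,n}=-A_{i,n}^*(u)$. $\tau$ is the $\mathbb{R}$-algebra involution of $\mathcal{A}$ conjugating scalars and sending $\partial_1^n(v_i)\mapsto\partial_2^n(w_i)$, $\partial_2^n(w_j)\mapsto\partial_1^n(v_j)$, $\partial_1^p\partial_2^q(u)\mapsto\partial_1^q\partial_2^p(u)$. *)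

theory Defs
  imports Complex_Main
begin

text \<open>
  An element of  A[\<partial>_a]((\<partial>_b^{-1}))  is encoded as a function
  P :: nat \<Rightarrow> int \<Rightarrow> 'a, where  P j m  is the coefficient of  \<partial>_a^j \<partial>_b^m,
  coefficients written on the LEFT (normal form  sum  P j m \<partial>_a^j \<partial>_b^m).
  Here \<partial>_a (polynomial variable) acts on A by the derivation da and
  \<partial>_b (pseudo-differential variable) by db.
  The ring  A[\<partial>_2]((\<partial>_1^{-1}))  is obtained with (da,db) = (d2,d1),
  the ring  A[\<partial>_1]((\<partial>_2^{-1}))  with (da,db) = (d1,d2).
\<close>

definition ibinom :: "int \<Rightarrow> nat \<Rightarrow> int" where
  "ibinom m k = (\<Prod>i<k. m - int i) div fact k"

type_synonym 'a mop = "nat \<Rightarrow> int \<Rightarrow> 'a"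

definition admissible :: "('a::zero) mop \<Rightarrow> bool" where
  "admissible P \<longleftrightarrow> (\<exists>J. \<forall>j>J. \<forall>m. P j m = 0) \<and> (\<exists>M::int. \<forall>j m. M < m \<longrightarrow> P j m = 0)"

definition degA :: "('a::zero) mop \<Rightarrow> nat" where
  "degA P = (SOME J. \<forall>j>J. \<forall>m. P j m = 0)"

definition ordB :: "('a::zero) mop \<Rightarrow> int" where
  "ordB P = (SOME M. \<forall>j m. M < m \<longrightarrow> P j m = 0)"

text \<open>Product, using  \<partial>_a^j \<partial>_b^m \<circ> c =
  sum_{s,k} (j choose s) binom(m,k) da^s(db^k c) \<partial>_a^(j-s) \<partial>_b^(m-k).\<close>
definition mmul :: "('a::comm_ring_1 \<Rightarrow> 'a) \<Rightarrow> ('a \<Rightarrow> 'a) \<Rightarrow> 'a mop \<Rightarrow> 'a mop \<Rightarrow> 'a mop" where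
  "mmul da db P Q = (\<lambda>(j::nat) (r::int).
     \<Sum>j1\<in>{0..degA P}. \<Sum>s\<in>{0..j1}. \<Sum>j2\<in>{0..degA Q}.
     \<Sum>m1\<in>{r - ordB Q..ordB P}. \<Sum>m2\<in>{r - ordB P..ordB Q}.
       (if j1 + j2 = j + s \<and> r \<le> m1 + m2 then
          of_nat (j1 choose s) * of_int (ibinom m1 (nat (m1 + m2 - r))) * P j1 m1 *
          (da ^^ s) ((db ^^ nat (m1 + m2 - r)) (Q j2 m2))
        else 0))"

definition madd :: "('a::ab_group_add) mop \<Rightarrow> 'a mop \<Rightarrow> 'a mop" where
  "madd P Q = (\<lambda>j m. P j m + Q j m)"

definition msub :: "('a::ab_group_add) mop \<Rightarrow> 'a mop \<Rightarrow> 'a mop" where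
  "msub P Q = (\<lambda>j m. P j m - Q j m)"

definition mcomm :: "('a::comm_ring_1 \<Rightarrow> 'a) \<Rightarrow> ('a \<Rightarrow> 'a) \<Rightarrow> 'a mop \<Rightarrow> 'a mop \<Rightarrow> 'a mop" where
  "mcomm da db P Q = msub (mmul da db P Q) (mmul da db Q P)"

definition mconst :: "'a::zero \<Rightarrow> 'a mop" where
  "mconst a = (\<lambda>j m. if j = 0 \<and> m = 0 then a else 0)"

definition monoB :: "int \<Rightarrow> ('a::{zero,one}) mop" where
  "monoB n = (\<lambda>j m. if j = 0 \<and> m = n then 1 else 0)"

definition monoA :: "nat \<Rightarrow> ('a::{zero,one}) mop" where
  "monoA n = (\<lambda>j m. if j = n \<and> m = 0 then 1 else 0)"

definition mmap :: "('a \<Rightarrow> 'a) \<Rightarrow> 'a mop \<Rightarrow> 'a mop" where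
  "mmap f P = (\<lambda>j m. f (P j m))"

definition mplus :: "('a::zero) mop \<Rightarrow> 'a mop" where
  "mplus P = (\<lambda>j m. if 0 \<le> m then P j m else 0)"

text \<open>A differential operator  sum_m a_m \<partial>_b^m  (j = 0, m \<ge> 0) viewed as an
  element of the other ring, i.e. as a polynomial  sum_m a_m \<partial>^m  in the
  polynomial variable.\<close>
definition mtransp :: "('a::zero) mop \<Rightarrow> 'a mop" where
  "mtransp P = (\<lambda>j m. if m = 0 then P 0 (int j) else 0)"

text \<open>L = \<partial>^{-1}(\<partial>^2 + sum_{i\<ge>0} \<partial>^{-i} c_i \<partial>^{-i})
       = \<partial> + sum_i \<partial>^{-i-1} c_i \<partial>^{-i}; the term with index i only contributes
  to orders \<le> -2i-1, so the sum defining each coefficient is finite.\<close>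
definition Lop :: "('a::comm_ring_1 \<Rightarrow> 'a) \<Rightarrow> ('a \<Rightarrow> 'a) \<Rightarrow> (nat \<Rightarrow> 'a) \<Rightarrow> 'a mop" where
  "Lop da db c = (\<lambda>(j::nat) (r::int). monoB 1 j r +
     (\<Sum>i\<in>{0..nat (- r)}.
        mmul da db (mmul da db (monoB (- int i - 1)) (mconst (c i))) (monoB (- int i)) j r))"

definition Hop :: "'a::comm_ring_1 \<Rightarrow> 'a mop" where
  "Hop u = madd (\<lambda>j m. if j = 1 \<and> m = 1 then 1 else 0) (mconst u)"

definition is_modH :: "('a::comm_ring_1 \<Rightarrow> 'a) \<Rightarrow> ('a \<Rightarrow> 'a) \<Rightarrow> 'a \<Rightarrow> 'a mop \<Rightarrow> 'a mop \<Rightarrow> bool" where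
  "is_modH da db u P R \<longleftrightarrow> admissible R \<and> (\<forall>j>0. \<forall>m. R j m = 0) \<and>
     (\<exists>Q. admissible Q \<and> msub P R = mmul da db Q (Hop u))"

text \<open>A^*(f) for a differential operator A = sum_m a_m \<partial>^m (j = 0, m \<ge> 0):
  A^* = sum_m (-\<partial>)^m \<circ> a_m, so A^*(f) = sum_m (-1)^m \<partial>^m (a_m f).\<close>
definition adj_apply :: "('a::comm_ring_1 \<Rightarrow> 'a) \<Rightarrow> 'a mop \<Rightarrow> 'a \<Rightarrow> 'a" where
  "adj_apply db P f = (\<Sum>m\<in>{0..nat (ordB P)}. (-1) ^ m * (db ^^ m) (P 0 (int m) * f))"

definition is_derivation :: "('a::{comm_ring_1,real_algebra_1} \<Rightarrow> 'a) \<Rightarrow> bool" where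
  "is_derivation D \<longleftrightarrow> (\<forall>x y. D (x + y) = D x + D y) \<and> (\<forall>x y. D (x * y) = D x * y + x * D y)
     \<and> (\<forall>c x. D (c *\<^sub>R x) = c *\<^sub>R D x)"

end

theory Submission
  imports Defs
begin

definition valid :: "nat \<Rightarrow> int \<Rightarrow> ('a::zero) mop \<Rightarrow> bool" where
  "valid J M P \<longleftrightarrow> (\<forall>j>J. \<forall>m. P j m = 0) \<and> (\<forall>j m. M < m \<longrightarrow> P j m = 0)"

lemma admissible_valid: "admissible P \<Longrightarrow> valid (degA P) (ordB P) P"
proof -
  assume a: "admissible P"
  then have 1: "\<exists>J. \<forall>j>J. \<forall>m. P j m = 0" and 2: "\<exists>M::int. \<forall>j m. M < m \<longrightarrow> P j m = 0"
    unfolding admissible_def by auto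
  show ?thesis unfolding valid_def degA_def ordB_def
    using someI_ex[OF 1] someI_ex[OF 2] by blast
qed

lemma valid_admissible: "valid J M P \<Longrightarrow> admissible P"
  unfolding valid_def admissible_def by blast

definition mterm :: "('a::comm_ring_1 \<Rightarrow> 'a) \<Rightarrow> ('a \<Rightarrow> 'a) \<Rightarrow> 'a mop \<Rightarrow> 'a mop \<Rightarrow> nat \<Rightarrow> int \<Rightarrow> nat \<times> nat \<times> nat \<times> int \<times> int \<Rightarrow> 'a" where
  "mterm da db P Q j r = (\<lambda>(j1,s,j2,m1,m2). if j1 + j2 = j + s \<and> r \<le> m1 + m2 then
          of_nat (j1 choose s) * of_int (ibinom m1 (nat (m1 + m2 - r))) * P j1 m1 *
          (da ^^ s) ((db ^^ nat (m1 + m2 - r)) (Q j2 m2)) else 0)"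

definition Box :: "nat \<Rightarrow> int \<Rightarrow> nat \<Rightarrow> int \<Rightarrow> int \<Rightarrow> (nat \<times> nat \<times> nat \<times> int \<times> int) set" where
  "Box J1 M1 J2 M2 r = (SIGMA j1:{0..J1}. SIGMA s:{0..j1}. SIGMA j2:{0..J2}. {r - M2..M1} \<times> {r - M1..M2})"

lemma finite_Box[simp]: "finite (Box J1 M1 J2 M2 r)"
  unfolding Box_def by (intro finite_SigmaI finite_cartesian_product) auto

lemma Box_nested: "sum g (Box J1 M1 J2 M2 r) =
  (\<Sum>j1\<in>{0..J1}. \<Sum>s\<in>{0..j1}. \<Sum>j2\<in>{0..J2}. \<Sum>m1\<in>{r - M2..M1}. \<Sum>m2\<in>{r - M1..M2}. g (j1,s,j2,m1,m2))"
  unfolding Box_def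
  by (simp add: sum.Sigma sum.cartesian_product split_def)

lemma mmul_Box: "mmul da db P Q j r = sum (mterm da db P Q j r) (Box (degA P) (ordB P) (degA Q) (ordB Q) r)"
  unfolding Box_nested mmul_def mterm_def by simp

lemma funpow_zero: fixes f :: "'a::zero \<Rightarrow> 'a" shows "f 0 = 0 \<Longrightarrow> (f ^^ n) 0 = 0"
  by (induction n) auto

lemma mterm_support:
  assumes "valid J1 M1 P" "valid J2 M2 Q" "da 0 = 0" "db 0 = 0"
    and "mterm da db P Q j r t \<noteq> 0"
  shows "t \<in> Box J1 M1 J2 M2 r"
proof -
  obtain j1 s j2 m1 m2 where t: "t = (j1,s,j2,m1,m2)" by (cases t) auto
  note nz = assms(5)[unfolded t mterm_def, simplified]
  have c: "j1 + j2 = j + s" "r \<le> m1 + m2" using nz by (auto split: if_splits)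
  have s: "s \<le> j1"
  proof (rule ccontr)
    assume "\<not> s \<le> j1"
    then have "j1 choose s = 0" by simp
    then have "(of_nat (j1 choose s)::'a) = 0" using \<open>\<not> s \<le> j1\<close> by (simp add: binomial_eq_0)
    then show False using nz c by (simp split: if_splits)
  qed
  have p: "P j1 m1 \<noteq> 0" using nz by (auto split: if_splits)
  have q: "Q j2 m2 \<noteq> 0" using nz funpow_zero[of da, OF assms(3)] funpow_zero[of db, OF assms(4)]
    by (auto split: if_splits)
  have "j1 \<le> J1" "m1 \<le> M1" using p assms(1) unfolding valid_def by (meson not_le)+
  moreover have "j2 \<le> J2" "m2 \<le> M2" using q assms(2) unfolding valid_def by (meson not_le)+
  ultimately show ?thesis unfolding t Box_def using c s by auto
qed

lemma sum_supp:
  assumes "finite A" "finite B" "\<And>x. g x \<noteq> 0 \<Longrightarrow> x \<in> A" "\<And>x. g x \<noteq> 0 \<Longrightarrow> x \<in> B"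
  shows "sum g A = sum g B"
proof -
  have "sum g (A \<inter> B) = sum g A" by (rule sum.mono_neutral_left) (use assms in auto)
  moreover have "sum g (A \<inter> B) = sum g B" by (rule sum.mono_neutral_left) (use assms in auto)
  ultimately show ?thesis by simp
qed

lemma mmul_sum:
  assumes "admissible P" "admissible Q" "da 0 = 0" "db 0 = 0" "finite T"
    "\<And>t. mterm da db P Q j r t \<noteq> 0 \<Longrightarrow> t \<in> T"
  shows "mmul da db P Q j r = sum (mterm da db P Q j r) T"
  unfolding mmul_Box
proof (rule sum_supp)
  fix t assume "mterm da db P Q j r t \<noteq> 0"
  then show "t \<in> Box (degA P) (ordB P) (degA Q) (ordB Q) r"
    using mterm_support[where da=da and db=db, OF admissible_valid[OF assms(1)] admissible_valid[OF assms(2)] assms(3,4)] by blast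
qed (use assms in auto)

lemma mmul_box:
  assumes "valid J1 M1 P" "valid J2 M2 Q" "da 0 = 0" "db 0 = 0"
  shows "mmul da db P Q j r = sum (mterm da db P Q j r) (Box J1 M1 J2 M2 r)"
  by (rule mmul_sum) (use assms mterm_support[where da=da and db=db, OF assms] valid_admissible in auto)

lemma mmul_valid:
  assumes "valid J1 M1 P" "valid J2 M2 Q" "da 0 = 0" "db 0 = 0"
  shows "valid (J1+J2) (M1+M2) (mmul da db P Q)"
  unfolding valid_def
proof (intro conjI allI impI)
  fix j m assume j: "J1 + J2 < j"
  have "mmul da db P Q j m = sum (mterm da db P Q j m) {}"
  proof (rule mmul_sum)
    fix t assume "mterm da db P Q j m t \<noteq> 0"
    then have "t \<in> Box J1 M1 J2 M2 m" using mterm_support[where da=da and db=db, OF assms] by blast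
    then have "\<exists>j1 s j2 m1 m2. t = (j1,s,j2,m1,m2) \<and> j1 \<le> J1 \<and> j2 \<le> J2" unfolding Box_def by auto
    then obtain j1 s j2 m1 m2 where t: "t = (j1,s,j2,m1,m2)" "j1 \<le> J1" "j2 \<le> J2" by blast
    then show "t \<in> {}" using \<open>mterm da db P Q j m t \<noteq> 0\<close> j by (auto simp: mterm_def split: if_splits)
  qed (use assms valid_admissible in auto)
  then show "mmul da db P Q j m = 0" by simp
next
  fix j m assume m: "M1 + M2 < m"
  have "mmul da db P Q j m = sum (mterm da db P Q j m) {}"
  proof (rule mmul_sum)
    fix t assume "mterm da db P Q j m t \<noteq> 0"
    then have "t \<in> Box J1 M1 J2 M2 m" using mterm_support[where da=da and db=db, OF assms] by blast
    then show "t \<in> {}" using m unfolding Box_def by auto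
  qed (use assms valid_admissible in auto)
  then show "mmul da db P Q j m = 0" by simp
qed

lemma funpow_one: fixes f :: "'a::{zero,one} \<Rightarrow> 'a"
  shows "f 0 = 0 \<Longrightarrow> f 1 = 0 \<Longrightarrow> 0 < n \<Longrightarrow> (f ^^ n) 1 = 0"
proof (induction n)
  case (Suc n) then show ?case by (cases n) auto
qed auto

lemma funpow2_one: fixes f g :: "'a::{zero,one} \<Rightarrow> 'a"
  assumes "f 0 = 0" "f 1 = 0" "g 0 = 0" "g 1 = 0"
  shows "(f ^^ s) ((g ^^ k) 1) = (if s = 0 \<and> k = 0 then 1 else 0)"
  using assms funpow_one[of f s] funpow_one[of g k] funpow_zero[of f s]
  by (cases "k = 0"; cases "s = 0") auto

lemma valid_monoB: "valid 0 n (monoB n)"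
  unfolding valid_def monoB_def by auto

lemma valid_mconst: "valid 0 0 (mconst a)"
  unfolding valid_def mconst_def by auto

lemma mmul_monoB_mconst:
  assumes "da 0 = 0" "db 0 = 0"
  shows "mmul da db (monoB n) (mconst a) j r =
    (if j = 0 \<and> r \<le> n then of_int (ibinom n (nat (n - r))) * (db ^^ nat (n - r)) a else 0)"
proof -
  have "mmul da db (monoB n) (mconst a) j r = sum (mterm da db (monoB n) (mconst a) j r) {(0,0,0,n,0)}"
  proof (rule mmul_sum)
    fix t assume nz: "mterm da db (monoB n) (mconst a) j r t \<noteq> 0"
    obtain j1 s j2 m1 m2 where t: "t = (j1,s,j2,m1,m2)" by (cases t) auto
    show "t \<in> {(0,0,0,n,0)}"
      using nz funpow_zero[of da, OF assms(1)] funpow_zero[of db, OF assms(2)]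
      by (auto simp: t mterm_def monoB_def mconst_def split: if_splits)
  qed (use assms valid_admissible[OF valid_monoB] valid_admissible[OF valid_mconst] in auto)
  then show ?thesis by (simp add: mterm_def monoB_def mconst_def)
qed

lemma mmul_monoB_right:
  assumes "valid J M X" "da 0 = 0" "db 0 = 0" "da 1 = 0" "db 1 = 0"
  shows "mmul da db X (monoB m) j r = X j (r - m)"
proof -
  have "mmul da db X (monoB m) j r = sum (mterm da db X (monoB m) j r) {(j,0,0,r-m,m)}"
  proof (rule mmul_sum)
    fix t assume nz: "mterm da db X (monoB m) j r t \<noteq> 0"
    obtain j1 s j2 m1 m2 where t: "t = (j1,s,j2,m1,m2)" by (cases t) auto
    show "t \<in> {(j,0,0,r-m,m)}"
      using nz funpow_zero[of da, OF assms(2)] funpow_zero[of db, OF assms(3)]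
        funpow2_one[of da db, OF assms(2,4,3,5)]
      by (auto simp: t mterm_def monoB_def split: if_splits)
  qed (use assms valid_admissible[OF valid_monoB] valid_admissible in auto)
  then show ?thesis by (simp add: mterm_def monoB_def ibinom_def)
qed

lemma Lop_eq:
  assumes "da 0 = 0" "db 0 = 0" "da 1 = 0" "db 1 = 0"
  shows "Lop da db c j r = (if j = 0 then (if r = 1 then 1 else 0) +
     (\<Sum>i\<in>{0..nat (- r)}. if r + int i \<le> - int i - 1 then
        of_int (ibinom (- int i - 1) (nat (- 2 * int i - 1 - r))) * (db ^^ nat (- 2 * int i - 1 - r)) (c i)
      else 0) else 0)"
proof -
  have X: "mmul da db (mmul da db (monoB (- int i - 1)) (mconst (c i))) (monoB (- int i)) j r =
    (if j = 0 \<and> r + int i \<le> - int i - 1 then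
        of_int (ibinom (- int i - 1) (nat (- 2 * int i - 1 - r))) * (db ^^ nat (- 2 * int i - 1 - r)) (c i)
      else 0)" for i
  proof -
    have v: "valid (0+0) (- int i - 1 + 0) (mmul da db (monoB (- int i - 1)) (mconst (c i)))"
      by (rule mmul_valid[where da=da and db=db, OF valid_monoB valid_mconst assms(1,2)])
    show ?thesis
    proof -
      have e: "- int i - 1 - (r - - int i) = - 2 * int i - 1 - r" by simp
      show ?thesis
        unfolding mmul_monoB_right[where da=da and db=db, OF v assms] mmul_monoB_mconst[where da=da and db=db, OF assms(1,2)] e
        by auto
    qed
  qed
  show ?thesis unfolding Lop_def X by (auto simp: monoB_def)
qed

lemma Lop_valid:
  assumes "da 0 = 0" "db 0 = 0" "da 1 = 0" "db 1 = 0"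
  shows "valid 0 1 (Lop da db c)"
  unfolding valid_def Lop_eq[where da=da and db=db, OF assms] by auto

lemma nat_Icc_Suc: "{0..Suc n} = insert (Suc n) {0..n}" by auto

lemma Lop_vals:
  assumes "da 0 = 0" "db 0 = 0" "da 1 = 0" "db 1 = 0"
  shows "Lop da db c 0 1 = 1" "Lop da db c 0 0 = 0" "Lop da db c 0 (-1) = c 0"
    "Lop da db c 0 (-2) = - db (c 0)" "Lop da db c 0 (-3) = db (db (c 0)) + c 1"
    "Lop da db c 0 (-4) = - db (db (db (c 0))) - 2 * db (c 1)"
  by (simp_all add: Lop_eq[where da=da and db=db, OF assms] ibinom_def numeral_eq_Suc nat_Icc_Suc lessThan_Suc)

lemma icc_int_empty: "b < a \<Longrightarrow> {a..b::int} = {}" by auto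
lemma icc_int_insert: "a \<le> b \<Longrightarrow> {a..b::int} = insert a {a+1..b}" by auto

context
  fixes D :: "'a::{comm_ring_1,real_algebra_1} \<Rightarrow> 'a"
  assumes der: "is_derivation D"
begin

lemma der_add: "D (x + y) = D x + D y" using der unfolding is_derivation_def by blast
lemma der_mult: "D (x * y) = D x * y + x * D y" using der unfolding is_derivation_def by blast
lemma der_zero: "D 0 = 0" using der_add[of 0 0] by simp
lemma der_one: "D 1 = 0" using der_mult[of 1 1] by simp
lemma der_uminus: "D (- x) = - D x"
  using der_add[of x "- x"] der_zero by (simp add: eq_neg_iff_add_eq_0 add.commute)
lemma der_diff: "D (x - y) = D x - D y"
  using der_add[of x "- y"] der_uminus[of y] by simp
lemma der_of_nat: "D (of_nat n) = 0"
  by (induction n) (simp_all add: der_zero der_add der_one)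
lemma der_numeral: "D (numeral n) = 0"
  using der_of_nat[of "numeral n"] by simp
lemma der_of_int: "D (of_int k) = 0"
  by (cases k) (simp_all add: der_of_nat der_uminus der_diff der_one)

end

lemmas der_simps = der_add der_mult der_zero der_one der_uminus der_diff der_of_nat der_numeral der_of_int

lemma Hop_valid: "valid 1 1 (Hop u)"
  unfolding valid_def Hop_def madd_def mconst_def by auto

lemma QH:
  assumes V: "valid JQ MQ Q" and z: "da 0 = 0" "db 0 = 0" "da 1 = 0" "db 1 = 0"
    and van: "\<And>j' m'. j \<le> j' \<Longrightarrow> r \<le> m' \<Longrightarrow> (j',m') \<noteq> (j,r) \<Longrightarrow> Q j' m' = 0"
  shows "mmul da db Q (Hop u) j r = (if 1 \<le> j then Q (j-1) (r-1) else 0) + Q j r * u"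
proof -
  have "mmul da db Q (Hop u) j r = sum (mterm da db Q (Hop u) j r) {(j-1,0,1,r-1,1), (j,0,0,r,0)}"
  proof (rule mmul_sum)
    fix t assume nz: "mterm da db Q (Hop u) j r t \<noteq> 0"
    obtain j1 s j2 m1 m2 where t: "t = (j1,s,j2,m1,m2)" by (cases t) auto
    note nz' = nz[unfolded t mterm_def, simplified]
    have c: "j1 + j2 = j + s" "r \<le> m1 + m2" using nz' by (auto split: if_splits)
    have nzH: "(da ^^ s) ((db ^^ nat (m1 + m2 - r)) (Hop u j2 m2)) \<noteq> 0" "Q j1 m1 \<noteq> 0"
      using nz' by (auto split: if_splits)
    show "t \<in> {(j-1,0,1,r-1,1), (j,0,0,r,0)}"
    proof (cases "j2 = 1 \<and> m2 = 1")
      case True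
      then have "Hop u j2 m2 = 1" by (simp add: Hop_def madd_def mconst_def)
      then have "s = 0 \<and> nat (m1 + m2 - r) = 0" using nzH funpow2_one[of da db, OF z(1,3,2,4)]
        by (auto split: if_splits)
      then show ?thesis using True c t by auto
    next
      case False
      note F = False
      show ?thesis
      proof (cases "j2 = 0 \<and> m2 = 0")
        case True
        then have "j \<le> j1" "r \<le> m1" using c by auto
        then have "(j1,m1) = (j,r)" using van nzH(2) by blast
        then show ?thesis using True c t by auto
      next
        case False
        then have "Hop u j2 m2 = 0" using F by (auto simp: Hop_def madd_def mconst_def)
        then show ?thesis using nzH funpow_zero[of da, OF z(1)] funpow_zero[of db, OF z(2)] by auto
      qed
    qed
  qed (use V Hop_valid valid_admissible z in auto)
  also have "... = (if 1 \<le> j then Q (j-1) (r-1) else 0) + Q j r * u"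
    by (simp add: mterm_def ibinom_def Hop_def madd_def mconst_def)
  finally show ?thesis .
qed

context
  fixes da db :: "'a::{comm_ring_1,real_algebra_1} \<Rightarrow> 'a" and c :: "nat \<Rightarrow> 'a"
  assumes dera: "is_derivation da" and derb: "is_derivation db"
begin

lemma z: "da 0 = 0" "db 0 = 0" "da 1 = 0" "db 1 = 0"
  using der_zero[OF dera] der_zero[OF derb] der_one[OF dera] der_one[OF derb] by auto

lemmas Lv = Lop_vals[where da=da and db=db, OF z]
lemmas LV = Lop_valid[where da=da and db=db and c=c, OF z]

abbreviation "zLL \<equiv> Lop da db c"
abbreviation "zL2 \<equiv> mmul da db zLL zLL"
abbreviation "zL3 \<equiv> mmul da db zL2 zLL"
abbreviation "zAA \<equiv> mplus zL3"

lemmas csimps = icc_int_empty icc_int_insert mterm_def ibinom_def numeral_eq_Suc lessThan_Suc der_simps[OF derb]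

lemma L2V: "valid 0 2 zL2"
  using mmul_valid[where da=da and db=db, OF LV LV z(1,2)] by simp

lemma L2_vals: "zL2 0 (-1) = - db (c 0)" "zL2 0 0 = 2 * c 0" "zL2 0 1 = 0" "zL2 0 2 = 1"
  unfolding mmul_box[where da=da and db=db, OF LV LV z(1,2)] Box_nested
  by (simp_all add: csimps Lv)


lemma L3V: "valid 0 3 zL3"
  using mmul_valid[where da=da and db=db, OF L2V LV z(1,2)] by simp

lemma L3_vals: "zL3 0 0 = 0" "zL3 0 1 = 3 * c 0" "zL3 0 2 = 0" "zL3 0 3 = 1"
  unfolding mmul_box[where da=da and db=db, OF L2V LV z(1,2)] Box_nested
  by (simp_all add: csimps Lv L2_vals)


lemma AV: "valid 0 3 zAA"
  using L3V unfolding valid_def mplus_def by auto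

lemma A_vals: "zAA 0 0 = 0" "zAA 0 1 = 3 * c 0" "zAA 0 2 = 0" "zAA 0 3 = 1"
   "zAA 0 (-1) = 0" "zAA 0 (-2) = 0"
  by (simp_all add: mplus_def L3_vals)

lemma comm_m1: "mcomm da db zAA zLL 0 (-1) = db (db (db (c 0))) + 6 * c 0 * db (c 0) + 3 * db (c 1)"
  unfolding mcomm_def msub_def mmul_box[where da=da and db=db, OF AV LV z(1,2)]
     mmul_box[where da=da and db=db, OF LV AV z(1,2)] Box_nested
  by (simp add: csimps Lv A_vals algebra_simps)

lemma adj_A: "adj_apply db zAA u = - (3 * db (c 0) * u) - 3 * c 0 * db u - db (db (db u))"
proof -
  have "adj_apply db zAA u = (\<Sum>m\<in>{0..3}. (-1) ^ m * (db ^^ m) (zAA 0 (int m) * u))"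
    unfolding adj_apply_def
  proof (rule sum_supp)
    fix m assume nz: "(-1) ^ m * (db ^^ m) (zAA 0 (int m) * u) \<noteq> 0"
    then have "zAA 0 (int m) \<noteq> 0" using funpow_zero[of db m, OF z(2)] by auto
    then show "m \<in> {0..3}" using AV unfolding valid_def by force
    show "m \<in> {0..nat (ordB zAA)}" using \<open>zAA 0 (int m) \<noteq> 0\<close> admissible_valid[OF valid_admissible[OF AV]]
      unfolding valid_def by force
  qed auto
  also have "... = - (3 * db (c 0) * u) - 3 * c 0 * db u - db (db (db u))"
    by (simp add: numeral_eq_Suc nat_Icc_Suc A_vals der_simps[OF derb])
  finally show ?thesis .
qed

lemma UV: "valid 0 (-1) (mmul da db (monoB (-1)) (mconst u))"
  using mmul_valid[where da=da and db=db, OF valid_monoB valid_mconst z(1,2)] by simp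

lemma rel_lemma:
  assumes "mmap da zLL = mcomm da db zLL (mmul da db (monoB (-1)) (mconst u))"
  shows "da (c 0) = db u"
proof -
  have "da (c 0) = mmap da zLL 0 (-1)" by (simp add: mmap_def Lv)
  also have "... = db u" unfolding assms mcomm_def msub_def
    mmul_box[where da=da and db=db, OF LV UV z(1,2)] mmul_box[where da=da and db=db, OF UV LV z(1,2)] Box_nested
    by (simp add: csimps Lv mmul_monoB_mconst[where da=da and db=db, OF z(1,2)])
  finally show ?thesis .
qed

lemma modH_lemma:
  assumes BV: "valid 0 3 B" and B: "B 0 0 = 0" "B 0 1 = 3 * e" "B 0 2 = 0" "B 0 3 = 1"
    and H: "is_modH da db u (mcomm da db (mtransp B) zLL) R"
  shows "R 0 (-1) = 3 * e * da (c 0) + da (da (da (c 0))) + 3 * db e * u"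
proof -
  define P where "P = mcomm da db (mtransp B) zLL"
  have TV: "valid 3 0 (mtransp B)" using BV unfolding valid_def mtransp_def by auto
  have PV: "valid 3 1 P"
    using mmul_valid[where da=da and db=db, OF TV LV z(1,2)] mmul_valid[where da=da and db=db, OF LV TV z(1,2)]
    unfolding P_def mcomm_def msub_def valid_def by auto
  have Tv: "mtransp B 0 0 = 0" "mtransp B (Suc 0) 0 = 3 * e" "mtransp B (Suc (Suc 0)) 0 = 0" "mtransp B (Suc (Suc (Suc 0))) 0 = 1"
    "\<And>j m. m \<noteq> 0 \<Longrightarrow> mtransp B j m = 0"
    using B by (auto simp: mtransp_def)
  note Pbox = P_def mcomm_def msub_def mmul_box[where da=da and db=db, OF TV LV z(1,2)]
     mmul_box[where da=da and db=db, OF LV TV z(1,2)] Box_nested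
  have Pv: "P 2 0 = 0" "P 2 1 = 0" "P 3 0 = 0" "P 3 1 = 0" "P 1 1 = 0" "P 1 0 = - (3 * db e)" "P 0 (-1) = 3 * e * da (c 0) + da (da (da (c 0)))"
    unfolding Pbox by (simp_all add: csimps Lv Tv der_simps[OF dera])
  have P2: "P j r = 0" if "2 \<le> j" "0 \<le> r" for j r
  proof (cases "j \<le> 3 \<and> r \<le> 1")
    case True
    then have "j = 2 \<or> j = 3" "r = 0 \<or> r = 1" using that by auto
    then show ?thesis using Pv by auto
  next
    case False then show ?thesis using PV unfolding valid_def by auto
  qed
  have P1: "P 1 r = 0" if "1 \<le> r" for r
  proof (cases "r = 1")
    case True then show ?thesis using Pv by auto
  next
    case False then show ?thesis using PV that unfolding valid_def by auto
  qed
  obtain Q where QA: "admissible Q" and eq0: "msub P R = mmul da db Q (Hop u)"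
    and R0: "\<And>j m. 0 < j \<Longrightarrow> R j m = 0"
    using H unfolding is_modH_def P_def by blast
  define JQ MQ where "JQ = degA Q" and "MQ = ordB Q"
  have QV: "valid JQ MQ Q" using admissible_valid[OF QA] unfolding JQ_def MQ_def .
  have eq: "P j r - R j r = mmul da db Q (Hop u) j r" for j r
    using fun_cong[OF fun_cong[OF eq0, of j], of r] unfolding msub_def by simp
  note QH' = QH[where da=da and db=db, OF QV z]
  have ind: "\<forall>m j. 1 \<le> j \<longrightarrow> -1 \<le> m \<longrightarrow> MQ - int n < m \<longrightarrow> Q j m = 0" for n
  proof (induction n)
    case 0 then show ?case using QV unfolding valid_def by auto
  next
    case (Suc n)
    show ?case
    proof (intro allI impI)
      fix m :: int and j :: nat assume j: "1 \<le> j" and m: "-1 \<le> m" and mb: "MQ - int (Suc n) < m"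
      show "Q j m = 0"
      proof (cases "MQ - int n < m")
        case True then show ?thesis using Suc j m by auto
      next
        case False
        have "mmul da db Q (Hop u) (j+1) (m+1) = (if 1 \<le> j+1 then Q (j+1-1) (m+1-1) else 0) + Q (j+1) (m+1) * u"
          by (rule QH') (use Suc False mb m in auto)
        moreover have "Q (j+1) (m+1) = 0" using Suc False mb m by auto
        moreover have "P (j+1) (m+1) = 0" using P2 j m by auto
        moreover have "R (j+1) (m+1) = 0" using R0 by auto
        ultimately show ?thesis using eq[of "j+1" "m+1"] by simp
      qed
    qed
  qed
  have Qvan: "Q j m = 0" if "1 \<le> j" "-1 \<le> m" for j m
    using ind[of "nat (MQ - m) + 1"] that by auto
  have Q0: "Q 0 m = 0" if "0 \<le> m" for m
  proof -
    have "mmul da db Q (Hop u) 1 (m+1) = (if 1 \<le> (1::nat) then Q (1-1) (m+1-1) else 0) + Q 1 (m+1) * u"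
      by (rule QH') (use Qvan that in auto)
    then show ?thesis using eq[of 1 "m+1"] P1[of "m+1"] R0[of 1 "m+1"] Qvan[of 1 "m+1"] that by simp
  qed
  have Qm1: "Q 0 (-1) = - (3 * db e)"
  proof -
    have "mmul da db Q (Hop u) 1 0 = (if 1 \<le> (1::nat) then Q (1-1) (0-1) else 0) + Q 1 0 * u"
      by (rule QH') (use Qvan in auto)
    then show ?thesis using eq[of 1 0] Pv R0[of 1 0] Qvan[of 1 0] by simp
  qed
  have "mmul da db Q (Hop u) 0 (-1) = (if 1 \<le> (0::nat) then Q (0-1) (-1-1) else 0) + Q 0 (-1) * u"
  proof (rule QH')
    fix j' :: nat and m' :: int assume "0 \<le> j'" "-1 \<le> m'" "(j', m') \<noteq> (0, -1)"
    then show "Q j' m' = 0" using Qvan Q0 by (cases "j' = 0") auto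
  qed
  then show ?thesis using eq[of 0 "-1"] Pv Qm1 by (simp add: algebra_simps)
qed

end

theorem mainTheorem9:
  fixes d1 d2 D11 D21 :: "'a::{comm_ring_1,real_algebra_1} \<Rightarrow> 'a"
    and u :: 'a and v w :: "nat \<Rightarrow> 'a"
  defines "L1 \<equiv> Lop d2 d1 v"
      and "L2 \<equiv> Lop d1 d2 w"
  defines "A11 \<equiv> mplus (mmul d2 d1 (mmul d2 d1 L1 L1) L1)"
      and "A21 \<equiv> mplus (mmul d1 d2 (mmul d1 d2 L2 L2) L2)"
  assumes der1: "is_derivation d1" and der2: "is_derivation d2"
      and comm12: "\<And>x. d1 (d2 x) = d2 (d1 x)"
      and rel1: "mmap d2 L1 = mcomm d2 d1 L1 (mmul d2 d1 (monoB (-1)) (mconst u))"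
      and rel2: "mmap d1 L2 = mcomm d1 d2 L2 (mmul d1 d2 (monoB (-1)) (mconst u))"
      and derD11: "is_derivation D11" and derD21: "is_derivation D21"
      and evol11: "\<And>x. D11 (d1 x) = d1 (D11 x)" "\<And>x. D11 (d2 x) = d2 (D11 x)"
      and evol21: "\<And>x. D21 (d1 x) = d1 (D21 x)" "\<And>x. D21 (d2 x) = d2 (D21 x)"
      and L1_11: "mmap D11 L1 = mcomm d2 d1 A11 L1"
      and L2_21: "mmap D21 L2 = mcomm d1 d2 A21 L2"
      and L1_21: "is_modH d2 d1 u (mcomm d2 d1 (mtransp A21) L1) (mmap D21 L1)"
      and L2_11: "is_modH d1 d2 u (mcomm d1 d2 (mtransp A11) L2) (mmap D11 L2)"
      and u_11: "D11 u = - adj_apply d1 A11 u"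
      and u_21: "D21 u = - adj_apply d2 A21 u"
  shows "D11 u + D21 u = (d1^^3) u + (d2^^3) u + 3 * d1 (v 0 * u) + 3 * d2 (w 0 * u)
    \<and> D11 (v 0) + D21 (v 0) = (d1^^3) (v 0) + (d2^^3) (v 0) + 6 * v 0 * d1 (v 0)
           + 3 * d1 (u * w 0) + 3 * d1 (v 1)
    \<and> d2 (v 0) = d1 u
    \<and> d1 (w 0) = d2 u
    \<and> (D11 u + D21 u = (d1^^3) u + (d2^^3) u + d1 (u * (3 * v 0)) + d2 (u * (3 * w 0))
         \<and> 3 * d1 u = d2 (3 * v 0))"
proof -
  have c3: "d2 (v 0) = d1 u" using rel_lemma[OF der2 der1 rel1[unfolded L1_def]] .
  have c4: "d1 (w 0) = d2 u" using rel_lemma[OF der1 der2 rel2[unfolded L2_def]] .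
  have u1: "D11 u = 3 * d1 (v 0) * u + 3 * v 0 * d1 u + d1 (d1 (d1 u))"
    using u_11 adj_A[OF der2 der1, of v u] unfolding A11_def L1_def by simp
  have u2: "D21 u = 3 * d2 (w 0) * u + 3 * w 0 * d2 u + d2 (d2 (d2 u))"
    using u_21 adj_A[OF der1 der2, of w u] unfolding A21_def L2_def by simp
  have v1: "D11 (v 0) = d1 (d1 (d1 (v 0))) + 6 * v 0 * d1 (v 0) + 3 * d1 (v 1)"
  proof -
    have "D11 (v 0) = mmap D11 L1 0 (-1)" unfolding mmap_def L1_def by (simp add: Lv[OF der2 der1])
    also have "... = mcomm d2 d1 A11 L1 0 (-1)" using L1_11 by simp
    also have "... = d1 (d1 (d1 (v 0))) + 6 * v 0 * d1 (v 0) + 3 * d1 (v 1)"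
      unfolding A11_def L1_def by (rule comm_m1[OF der2 der1])
    finally show ?thesis .
  qed
  have v2: "D21 (v 0) = 3 * w 0 * d2 (v 0) + d2 (d2 (d2 (v 0))) + 3 * d1 (w 0) * u"
  proof -
    have "D21 (v 0) = mmap D21 L1 0 (-1)" unfolding mmap_def L1_def by (simp add: Lv[OF der2 der1])
    also have "... = 3 * w 0 * d2 (v 0) + d2 (d2 (d2 (v 0))) + 3 * d1 (w 0) * u"
      by (rule modH_lemma[OF der2 der1 AV[OF der1 der2, where c=w] A_vals(1-4)[OF der1 der2, where c=w]])
         (use L1_21 in \<open>simp add: A21_def L2_def L1_def\<close>)
    finally show ?thesis .
  qed
  have e3: "(d1 ^^ 3) x = d1 (d1 (d1 x))" "(d2 ^^ 3) x = d2 (d2 (d2 x))" for x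
    by (simp_all add: numeral_eq_Suc)
  show ?thesis
    unfolding e3 using c3 c4 u1 u2 v1 v2
    by (simp add: der_simps[OF der1] der_simps[OF der2] algebra_simps)
qed

end
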